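(* Let $n$ be a positive integer and let $A(n)=(a_{ij})_{i,j\in\mathbb{N}}$ be the greedy matrix described in the context. For every $i\geq 1$ there exists $j$ with $1\leq j\leq i$ and $a_{ij}=1$.
   Context: $\mathbb{N}=\{1,2,3,\dots\}$. Fix a positive integer $n$. The infinite $\{0,1\}$-matrix $A(n)=(a_{ij})_{i,j\in\mathbb{N}}$ is defined recursively. Its entries are determined row by row (row $1$ first), and within each row from left to right, so that $a_{kl}$ is determined after all $a_{ij}$ with $i<k$ and all $a_{kj}$ with $j<l$. One sets $a_{kl}=1$ if and only if all of the following hold: (1) $\sum_{j<l}a_{kj}<n+1$; (2) $\sum_{i<k}a_{il}<n+1$; (3) there is no pair $(i,j)$ with $1\le i<k$, $1\le j<l$ and $a_{ij}=a_{il}=a_{kj}=1$. Otherwise $a_{kl}=0$. *)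

theory Defs
  imports Main
begin

text \<open>Indices are 1-based (rows and columns range over
positive naturals); entries at index 0 are irrelevant and set to False.
greedy n k l is True iff a_{kl} = 1. Every entry referenced when determining
a_{kl} has row index at most k and column index at most l, and is not (k,l),
so recursion terminates on k + l.\<close>

function greedy :: "nat \<Rightarrow> nat \<Rightarrow> nat \<Rightarrow> bool" where
  "greedy n k l =
     (if k = 0 \<or> l = 0 then False
      else (\<Sum>j\<in>{1..<l}. if greedy n k j then 1 else 0::nat) < n + 1
         \<and> (\<Sum>i\<in>{1..<k}. if greedy n i l then 1 else 0::nat) < n + 1
         \<and> \<not> (\<exists>i\<in>{1..<k}. \<exists>j\<in>{1..<l}.
                  greedy n i j \<and> greedy n i l \<and> greedy n k j))"
  by auto
termination
  by (relation "measure (\<lambda>(n, k, l). k + l)") auto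

end

theory Submission
  imports Defs
begin

declare greedy.simps[simp del]

lemma row_bound:
  "(\<Sum>j\<in>{1..<L}. if greedy n k j then 1 else 0::nat) \<le> n + 1"
proof (induction L)
  case 0 then show ?case by simp
next
  case (Suc L)
  show ?case
  proof (cases "L = 0")
    case True then show ?thesis by simp
  next
    case False
    have eq: "{1..<Suc L} = insert L {1..<L}" using False by auto
    have s: "(\<Sum>j\<in>{1..<Suc L}. if greedy n k j then 1 else 0::nat)
        = (if greedy n k L then 1 else 0) + (\<Sum>j\<in>{1..<L}. if greedy n k j then 1 else 0::nat)"
      unfolding eq by (simp)
    show ?thesis
    proof (cases "greedy n k L")
      case True
      then have "(\<Sum>j\<in>{1..<L}. if greedy n k j then 1 else 0::nat) < n + 1"
        using greedy.simps[of n k L] by (metis (no_types, lifting))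
      then show ?thesis using s True by simp
    next
      case f: False
      then show ?thesis using s Suc.IH by simp
    qed
  qed
qed

lemma col_full:
  assumes "i \<ge> 1" "l \<ge> 1" "\<forall>j\<in>{1..<l}. \<not> greedy n i j" "\<not> greedy n i l"
  shows "(\<Sum>k\<in>{1..<i}. if greedy n k l then 1 else 0::nat) \<ge> n + 1"
proof -
  have z: "(\<Sum>j\<in>{1..<l}. if greedy n i j then 1 else 0::nat) = 0"
    using assms(3) by simp
  have "\<not> (\<exists>k\<in>{1..<i}. \<exists>j\<in>{1..<l}. greedy n k j \<and> greedy n k l \<and> greedy n i j)"
    using assms(3) by blast
  with assms(1,2,4) z show ?thesis
    using greedy.simps[of n i l] by (auto simp add: not_less)
qed

theorem lemma3p4:
  fixes n i :: nat
  assumes "n \<ge> 1" and "i \<ge> 1"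
  shows "\<exists>j. 1 \<le> j \<and> j \<le> i \<and> greedy n i j"
proof (rule ccontr)
  assume H: "\<not> (\<exists>j. 1 \<le> j \<and> j \<le> i \<and> greedy n i j)"
  define g where "g k j = (if greedy n k j then 1 else 0::nat)" for k j
  have col: "n + 1 \<le> (\<Sum>k\<in>{1..<i}. g k l)" if "l \<in> {1..i}" for l
    using col_full[of i l n] that H assms(2) unfolding g_def by auto
  have "i * (n + 1) = (\<Sum>l\<in>{1..i}. n + 1)" by simp
  also have "\<dots> \<le> (\<Sum>l\<in>{1..i}. \<Sum>k\<in>{1..<i}. g k l)"
    by (rule sum_mono) (use col in auto)
  also have "\<dots> = (\<Sum>k\<in>{1..<i}. \<Sum>l\<in>{1..<Suc i}. g k l)"
    by (subst sum.swap) (simp add: atLeastLessThanSuc_atLeastAtMost)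
  also have "\<dots> \<le> (\<Sum>k\<in>{1..<i}. n + 1)"
    by (rule sum_mono) (unfold g_def, rule row_bound)
  also have "\<dots> = (i - 1) * (n + 1)" by simp
  finally have "i * (n + 1) \<le> (i - 1) * (n + 1)" .
  moreover have "(i - 1) * (n + 1) < i * (n + 1)" using assms(2) by (intro mult_strict_right_mono) auto
  ultimately show False by linarith
qed

end
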